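(* Let $G=(V,E)$ be a connected graph with positive edge costs $c:E\to\mathbb{R}_+$, let $\alpha\ge 1$, and let $(U,\complement{U})$ be an $\alpha$-approximate minimum cut of $G$. Then there exist subsets $S,T\subseteq V$ with $|S|,|T|\le \lfloor 2\alpha\rfloor+1$ such that $(U,\complement{U})$ is the unique minimum $(S,T)$-terminal cut.
   Context: A cut is a partition of $V$ into two non-empty parts; for $\emptyset\ne U\subsetneq V$ write $\complement{U}=V\setminus U$, $(U,\complement{U})$ for the corresponding cut, $\delta(U)$ for the set of edges with exactly one endpoint in $U$, and $d(U)=\sum_{e\in\delta(U)}c(e)$ for its cut value. Let $\lambda=\min\{d(U):\emptyset\ne U\subsetneq V\}$. For $\alpha\ge1$, the cut $(U,\complement{U})$ is an $\alpha$-approximate minimum cut if $d(U)\le\alpha\lambda$. For disjoint non-empty $S,T\subseteq V$, a cut $(U,\complement{U})$ is an $(S,T)$-terminal cut if $S\subseteq U\subseteq V\setminus T$; a minimum $(S,T)$-terminal cut is an $(S,T)$-terminal cut of minimum cut value $d(U)$. *)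

theory Defs
  imports Complex_Main
begin

definition graph :: "'a set \<Rightarrow> 'a set set \<Rightarrow> bool" where
  "graph V E \<longleftrightarrow> finite V \<and> (\<forall>e\<in>E. \<exists>u v. e = {u, v} \<and> u \<noteq> v \<and> u \<in> V \<and> v \<in> V)"

definition adj :: "'a set set \<Rightarrow> ('a \<times> 'a) set" where
  "adj E = {(u, v). {u, v} \<in> E}"

definition connected_graph :: "'a set \<Rightarrow> 'a set set \<Rightarrow> bool" where
  "connected_graph V E \<longleftrightarrow> graph V E \<and> (\<forall>u\<in>V. \<forall>v\<in>V. (u, v) \<in> (adj E)\<^sup>*)"

definition delta :: "'a set set \<Rightarrow> 'a set \<Rightarrow> 'a set set" where
  "delta E U = {e \<in> E. card (e \<inter> U) = 1}"

definition cut_value :: "'a set set \<Rightarrow> ('a set \<Rightarrow> real) \<Rightarrow> 'a set \<Rightarrow> real" where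
  "cut_value E c U = (\<Sum>e\<in>delta E U. c e)"

definition is_cut :: "'a set \<Rightarrow> 'a set \<Rightarrow> bool" where
  "is_cut V U \<longleftrightarrow> U \<noteq> {} \<and> U \<subset> V"

definition min_cut_value :: "'a set \<Rightarrow> 'a set set \<Rightarrow> ('a set \<Rightarrow> real) \<Rightarrow> real" where
  "min_cut_value V E c = Min {cut_value E c U | U. is_cut V U}"

definition approx_min_cut ::
  "'a set \<Rightarrow> 'a set set \<Rightarrow> ('a set \<Rightarrow> real) \<Rightarrow> real \<Rightarrow> 'a set \<Rightarrow> bool" where
  "approx_min_cut V E c \<alpha> U \<longleftrightarrow> is_cut V U \<and> cut_value E c U \<le> \<alpha> * min_cut_value V E c"

definition terminal_cut :: "'a set \<Rightarrow> 'a set \<Rightarrow> 'a set \<Rightarrow> 'a set \<Rightarrow> bool" where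
  "terminal_cut V S T U \<longleftrightarrow> S \<noteq> {} \<and> T \<noteq> {} \<and> S \<subseteq> V \<and> T \<subseteq> V \<and> S \<inter> T = {}
     \<and> S \<subseteq> U \<and> U \<subseteq> V - T"

definition unique_min_terminal_cut ::
  "'a set \<Rightarrow> 'a set set \<Rightarrow> ('a set \<Rightarrow> real) \<Rightarrow> 'a set \<Rightarrow> 'a set \<Rightarrow> 'a set \<Rightarrow> bool" where
  "unique_min_terminal_cut V E c S T U \<longleftrightarrow> terminal_cut V S T U \<and>
     (\<forall>W. terminal_cut V S T W \<and> W \<noteq> U \<longrightarrow> cut_value E c U < cut_value E c W)"

end

theory Submission
  imports Defs
begin


definition chi :: "'a set \<Rightarrow> 'a set \<Rightarrow> real" where
  "chi e W = (if card (e \<inter> W) = 1 then 1 else 0)"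

lemma chi_pair: "a \<noteq> b \<Longrightarrow> chi {a,b} W = (if (a \<in> W) \<noteq> (b \<in> W) then 1 else 0)"
  by (cases "a \<in> W"; cases "b \<in> W") (auto simp: chi_def insert_Diff_if Int_insert_left)

lemma graph_edge: "graph V E \<Longrightarrow> e \<in> E \<Longrightarrow> \<exists>a b. e = {a,b} \<and> a \<noteq> b \<and> a \<in> V \<and> b \<in> V"
  by (auto simp: graph_def)

lemma graph_finE: "graph V E \<Longrightarrow> finite E"
proof -
  assume G: "graph V E"
  have "E \<subseteq> Pow V" using G by (fastforce simp: graph_def)
  moreover have "finite V" using G by (simp add: graph_def)
  ultimately show ?thesis by (meson finite_Pow_iff finite_subset)
qed

lemma cut_value_chi: "finite E \<Longrightarrow> cut_value E c W = (\<Sum>e\<in>E. c e * chi e W)"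
  unfolding cut_value_def delta_def chi_def
  by (simp add: sum.inter_filter if_distrib cong: if_cong)

lemma sum_if_card: "finite A \<Longrightarrow> (\<Sum>x\<in>A. if P x then (1::real) else 0) = real (card {x\<in>A. P x})"
proof -
  assume "finite A"
  moreover have "A \<inter> Collect P = {x\<in>A. P x}" by auto
  ultimately show ?thesis by (simp add: sum.If_cases)
qed

lemma sum_swap_c: "(\<Sum>i\<in>I. \<Sum>e\<in>E. (c e::real) * f i e) = (\<Sum>e\<in>E. c e * (\<Sum>i\<in>I. f i e))"
  by (simp add: sum_distrib_left sum.swap[of _ I])

definition mlt :: "'a set \<Rightarrow> ('a \<Rightarrow> 'a set) \<Rightarrow> 'a \<Rightarrow> nat" where
  "mlt S X x = card {v\<in>S. x \<in> X v}"
definition prv :: "'a set \<Rightarrow> ('a \<Rightarrow> 'a set) \<Rightarrow> 'a \<Rightarrow> 'a set" where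
  "prv S X u = {x \<in> X u. \<forall>v\<in>S. x \<in> X v \<longrightarrow> v = u}"
definition lvl :: "'a set \<Rightarrow> ('a \<Rightarrow> 'a set) \<Rightarrow> 'a set \<Rightarrow> nat \<Rightarrow> 'a set" where
  "lvl S X U j = {x\<in>U. j \<le> mlt S X x}"

lemma lev_card:
  "card {j\<in>{3..k}. (j \<le> (p::nat)) \<noteq> (j \<le> q)} \<le> max p q - max 2 (min p q)"
proof -
  have "{j\<in>{3..k}. (j \<le> p) \<noteq> (j \<le> q)} \<subseteq> {Suc (max 2 (min p q))..max p q}"
    by auto
  then have "card {j\<in>{3..k}. (j \<le> p) \<noteq> (j \<le> q)} \<le> card {Suc (max 2 (min p q))..max p q}"
    by (intro card_mono) auto
  then show ?thesis by simp
qed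

lemma arith1: "(A::nat) \<le> 1 \<Longrightarrow> L \<le> max 1 q - max 2 (min 1 q) \<Longrightarrow> i \<le> 1 \<Longrightarrow> i \<le> q \<Longrightarrow> q \<noteq> 1 \<Longrightarrow> A + L \<le> (1 - i) + (q - i)"
  by (cases "q = 0") (auto simp: max_def min_def)
lemma arith2: "(L::nat) \<le> max p q - max 2 (min p q) \<Longrightarrow> i \<le> p \<Longrightarrow> i \<le> q \<Longrightarrow> L \<le> (p - i) + (q - i)"
  by (simp add: max_def min_def split: if_splits; linarith)

lemma comb_both:
  fixes P Q S :: "'a set"
  assumes fS: "finite S" and PS: "P \<subseteq> S" and QS: "Q \<subseteq> S"
  shows "card {u\<in>S. (P={u}) \<noteq> (Q={u})} + card {j\<in>{3..k}. (j \<le> card P) \<noteq> (j \<le> card Q)}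
         \<le> card (P - Q) + card (Q - P)"
proof -
  have fP: "finite P" and fQ: "finite Q" using fS PS QS finite_subset by auto
  define i where "i = card (P \<inter> Q)"
  have c1: "card (P - Q) = card P - i" unfolding i_def using fP by (simp add: card_Diff_subset_Int)
  have c2: "card (Q - P) = card Q - i" unfolding i_def using fQ by (simp add: card_Diff_subset_Int Int_commute)
  have i1: "i \<le> card P" unfolding i_def using fP by (simp add: card_mono)
  have i2: "i \<le> card Q" unfolding i_def using fQ by (simp add: card_mono)
  have lev: "card {j\<in>{3..k}. (j \<le> card P) \<noteq> (j \<le> card Q)} \<le> max (card P) (card Q) - max 2 (min (card P) (card Q))"
    by (rule lev_card)
  show ?thesis
  proof (cases "card P = 1")
    case True
    then obtain x where Px: "P = {x}" by (meson card_1_singletonE)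
    show ?thesis
    proof (cases "card Q = 1")
      case True
      then obtain y where Qy: "Q = {y}" by (meson card_1_singletonE)
      show ?thesis
      proof (cases "x = y")
        case True
        then have e: "{u\<in>S. (P={u}) \<noteq> (Q={u})} = {}" using Px Qy by auto
        have z: "card {u\<in>S. (P={u}) \<noteq> (Q={u})} = 0" by (simp only: e card.empty)
        have z2: "max (card P) (card Q) - max 2 (min (card P) (card Q)) = 0" using Px Qy by simp
        show ?thesis using lev z z2 by linarith
      next
        case False
        have "{u\<in>S. (P={u}) \<noteq> (Q={u})} \<subseteq> {x,y}" using Px Qy by auto
        then have "card {u\<in>S. (P={u}) \<noteq> (Q={u})} \<le> card {x,y}"
          by (intro card_mono) auto
        also have "\<dots> = 2" using False by simp
        finally have "card {u\<in>S. (P={u}) \<noteq> (Q={u})} \<le> 2" .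
        moreover have "card (P - Q) = 1" "card (Q - P) = 1" using Px Qy False by auto
        ultimately show ?thesis using lev Px Qy by simp
      qed
    next
      case False
      have "{u\<in>S. (P={u}) \<noteq> (Q={u})} \<subseteq> {x}" using Px False by auto
      then have A1: "card {u\<in>S. (P={u}) \<noteq> (Q={u})} \<le> 1"
        using card_mono[of "{x}"] by fastforce
      moreover have i1': "i \<le> 1" using i1 Px by simp
      have lev1: "card {j\<in>{3..k}. (j \<le> card P) \<noteq> (j \<le> card Q)} \<le> max 1 (card Q) - max 2 (min 1 (card Q))"
        using lev Px by simp
      have "card {u\<in>S. (P={u}) \<noteq> (Q={u})} + card {j\<in>{3..k}. (j \<le> card P) \<noteq> (j \<le> card Q)} \<le> (1 - i) + (card Q - i)"
        by (rule arith1[OF A1 lev1 i1' i2 False])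
      then show ?thesis using c1 c2 Px by simp
    qed
  next
    case F1: False
    show ?thesis
    proof (cases "card Q = 1")
      case True
      then obtain y where Qy: "Q = {y}" by (meson card_1_singletonE)
      have "{u\<in>S. (P={u}) \<noteq> (Q={u})} \<subseteq> {y}" using Qy F1 by auto
      then have A1: "card {u\<in>S. (P={u}) \<noteq> (Q={u})} \<le> 1"
        using card_mono[of "{y}"] by fastforce
      moreover have i1': "i \<le> 1" using i2 Qy by simp
      have lev1: "card {j\<in>{3..k}. (j \<le> card P) \<noteq> (j \<le> card Q)} \<le> max 1 (card P) - max 2 (min 1 (card P))"
        using lev True by (simp add: max.commute min.commute)
      have "card {u\<in>S. (P={u}) \<noteq> (Q={u})} + card {j\<in>{3..k}. (j \<le> card P) \<noteq> (j \<le> card Q)} \<le> (1 - i) + (card P - i)"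
        by (rule arith1[OF A1 lev1 i1' i1 F1])
      then show ?thesis using c1 c2 True by simp
    next
      case False
      have e: "{u\<in>S. (P={u}) \<noteq> (Q={u})} = {}" using False F1 by auto
      have "card {u\<in>S. (P={u}) \<noteq> (Q={u})} = 0" unfolding e by simp
      then show ?thesis using lev c1 c2 i1 i2 arith2 by simp
    qed
  qed
qed

lemma prv_iff: "u \<in> S \<Longrightarrow> (a \<in> prv S X u) = ({v\<in>S. a \<in> X v} = {u})"
  unfolding prv_def by blast

lemma prv_sub: "prv S X u \<subseteq> X u" unfolding prv_def by auto

lemma edge_out:
  assumes fS: "finite S" and ab: "a \<noteq> b" and XU: "\<And>u. u \<in> S \<Longrightarrow> X u \<subseteq> U"
    and aU: "a \<in> U" and bU: "b \<notin> U"
  shows "(\<Sum>u\<in>S. chi {a,b} (prv S X u)) + (\<Sum>u\<in>S. chi {a,b} U - chi {a,b} (U - X u))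
     + (\<Sum>j\<in>{3..card S}. chi {a,b} (U - lvl S X U j) - chi {a,b} U) \<le> 2 * chi {a,b} U"
proof -
  define P where "P = {v\<in>S. a \<in> X v}"
  define p where "p = card P"
  have pk: "p \<le> card S" unfolding p_def P_def using fS by (simp add: card_mono)
  have cU: "chi {a,b} U = 1" using aU bU ab by (simp add: chi_pair)
  have "(\<Sum>u\<in>S. chi {a,b} (prv S X u)) = (\<Sum>u\<in>S. if a \<in> prv S X u then 1 else 0)"
  proof (rule sum.cong)
    fix u assume uS: "u \<in> S"
    have "b \<notin> prv S X u" using XU[OF uS] prv_sub[of S X u] bU by blast
    then show "chi {a,b} (prv S X u) = (if a \<in> prv S X u then 1 else 0)" using chi_pair[OF ab, of "prv S X u"] by simp
  qed simp
  also have "\<dots> = real (card {u\<in>S. a \<in> prv S X u})" using fS by (rule sum_if_card)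
  finally have s1: "(\<Sum>u\<in>S. chi {a,b} (prv S X u)) = real (card {u\<in>S. a \<in> prv S X u})" .
  have c1a: "card {u\<in>S. a \<in> prv S X u} \<le> p"
  proof -
    have "{u\<in>S. a \<in> prv S X u} \<subseteq> P" unfolding P_def prv_def by auto
    then show ?thesis unfolding p_def using fS P_def by (simp add: card_mono)
  qed
  have c1b: "p \<noteq> 1 \<Longrightarrow> card {u\<in>S. a \<in> prv S X u} = 0"
  proof -
    assume "p \<noteq> 1"
    have "{u\<in>S. a \<in> prv S X u} = {}"
    proof (rule ccontr)
      assume "{u\<in>S. a \<in> prv S X u} \<noteq> {}"
      then obtain u where u: "u \<in> S" "a \<in> prv S X u" by blast
      then have "P = {u}" using prv_iff[OF u(1), of a X] unfolding P_def by simp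
      then show False using \<open>p \<noteq> 1\<close> unfolding p_def by simp
    qed
    then show ?thesis by (simp only: card.empty)
  qed
  have "(\<Sum>u\<in>S. chi {a,b} U - chi {a,b} (U - X u)) = (\<Sum>u\<in>S. if a \<in> X u then 1 else 0)"
  proof (rule sum.cong)
    fix u assume "u \<in> S"
    show "chi {a,b} U - chi {a,b} (U - X u) = (if a \<in> X u then 1 else 0)"
      using ab aU bU cU by (simp add: chi_pair)
  qed simp
  also have "\<dots> = real p" unfolding p_def P_def using fS by (rule sum_if_card)
  finally have s2: "(\<Sum>u\<in>S. chi {a,b} U - chi {a,b} (U - X u)) = real p" .
  have "(\<Sum>j\<in>{3..card S}. chi {a,b} (U - lvl S X U j) - chi {a,b} U)
       = - (\<Sum>j\<in>{3..card S}. if j \<le> p then 1 else 0)"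
    unfolding sum_negf[symmetric]
  proof (rule sum.cong)
    fix j assume "j \<in> {3..card S}"
    have "mlt S X a = p" unfolding mlt_def p_def P_def by simp
    then show "chi {a,b} (U - lvl S X U j) - chi {a,b} U = - (if j \<le> p then 1 else 0)"
      using ab aU bU cU by (simp add: chi_pair lvl_def)
  qed simp
  also have "\<dots> = - real (card {j\<in>{3..card S}. j \<le> p})" by (subst sum_if_card) simp_all
  finally have s3a: "(\<Sum>j\<in>{3..card S}. chi {a,b} (U - lvl S X U j) - chi {a,b} U) = - real (card {j\<in>{3..card S}. j \<le> p})" .
  have "{j\<in>{3..card S}. j \<le> p} = {3..p}" using pk by auto
  then have "card {j\<in>{3..card S}. j \<le> p} = p - 2" by simp
  then have s3: "(\<Sum>j\<in>{3..card S}. chi {a,b} (U - lvl S X U j) - chi {a,b} U) = - real (p - 2)"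
    using s3a by simp
  show ?thesis
  proof (cases "2 \<le> p")
    case True
    then have r: "real (p - 2) = real p - 2" by simp
    have "card {u\<in>S. a \<in> prv S X u} = 0" using c1b True by simp
    then show ?thesis using s1 s2 s3 r cU by linarith
  next
    case False
    then have r: "real (p - 2) = 0" by simp
    have "real (card {u\<in>S. a \<in> prv S X u}) + real p \<le> 2"
    proof (cases "p = 1")
      case True then show ?thesis using c1a by simp
    next
      case F: False
      then have "p = 0" using False by simp
      then show ?thesis using c1b by simp
    qed
    then show ?thesis using s1 s2 s3 r cU by linarith
  qed
qed

lemma edge_none:
  assumes XU: "\<And>u. u \<in> S \<Longrightarrow> X u \<subseteq> U" and ab: "a \<noteq> b"
    and aU: "a \<notin> U" and bU: "b \<notin> U"
  shows "(\<Sum>u\<in>S. chi {a,b} (prv S X u)) + (\<Sum>u\<in>S. chi {a,b} U - chi {a,b} (U - X u))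
     + (\<Sum>j\<in>{3..card S}. chi {a,b} (U - lvl S X U j) - chi {a,b} U) \<le> 2 * chi {a,b} U"
proof -
  have "chi {a,b} (prv S X u) = 0" if uS: "u \<in> S" for u
  proof -
    have "a \<notin> prv S X u" "b \<notin> prv S X u" using XU[OF uS] prv_sub[of S X u] aU bU by blast+
    then show ?thesis using chi_pair[OF ab, of "prv S X u"] by simp
  qed
  moreover have "\<And>u. chi {a,b} (U - X u) = 0" "chi {a,b} U = 0"
    "\<And>j. chi {a,b} (U - lvl S X U j) = 0"
    using aU bU ab by (simp_all add: chi_pair)
  ultimately show ?thesis by simp
qed

lemma edge_in:
  assumes fS: "finite S" and ab: "a \<noteq> b" and XU: "\<And>u. u \<in> S \<Longrightarrow> X u \<subseteq> U"
    and aU: "a \<in> U" and bU: "b \<in> U"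
  shows "(\<Sum>u\<in>S. chi {a,b} (prv S X u)) + (\<Sum>u\<in>S. chi {a,b} U - chi {a,b} (U - X u))
     + (\<Sum>j\<in>{3..card S}. chi {a,b} (U - lvl S X U j) - chi {a,b} U) \<le> 2 * chi {a,b} U"
proof -
  define P where "P = {v\<in>S. a \<in> X v}"
  define Q where "Q = {v\<in>S. b \<in> X v}"
  have cU: "chi {a,b} U = 0" using aU bU ab by (simp add: chi_pair)
  have "(\<Sum>u\<in>S. chi {a,b} (prv S X u)) = (\<Sum>u\<in>S. if (P = {u}) \<noteq> (Q = {u}) then 1 else 0)"
  proof (rule sum.cong)
    fix u assume u: "u \<in> S"
    show "chi {a,b} (prv S X u) = (if (P = {u}) \<noteq> (Q = {u}) then 1 else 0)"
      using ab prv_iff[OF u, of a X] prv_iff[OF u, of b X] unfolding P_def Q_def by (simp add: chi_pair)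
  qed simp
  also have "\<dots> = real (card {u\<in>S. (P = {u}) \<noteq> (Q = {u})})" using fS by (rule sum_if_card)
  finally have s1: "(\<Sum>u\<in>S. chi {a,b} (prv S X u)) = real (card {u\<in>S. (P = {u}) \<noteq> (Q = {u})})" .
  have "(\<Sum>u\<in>S. chi {a,b} U - chi {a,b} (U - X u)) = - (\<Sum>u\<in>S. if (a \<in> X u) \<noteq> (b \<in> X u) then 1 else 0)"
    unfolding sum_negf[symmetric]
  proof (rule sum.cong)
    fix u assume "u \<in> S"
    show "chi {a,b} U - chi {a,b} (U - X u) = - (if (a \<in> X u) \<noteq> (b \<in> X u) then 1 else 0)"
      using ab aU bU cU by (simp add: chi_pair)
  qed simp
  also have "\<dots> = - real (card {u\<in>S. (a \<in> X u) \<noteq> (b \<in> X u)})" using fS by (simp add: sum_if_card)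
  also have "{u\<in>S. (a \<in> X u) \<noteq> (b \<in> X u)} = (P - Q) \<union> (Q - P)" unfolding P_def Q_def by auto
  also have "card ((P - Q) \<union> (Q - P)) = card (P - Q) + card (Q - P)"
    by (rule card_Un_disjoint) (use fS in \<open>auto simp: P_def Q_def\<close>)
  finally have s2: "(\<Sum>u\<in>S. chi {a,b} U - chi {a,b} (U - X u)) = - real (card (P - Q) + card (Q - P))" .
  have ma: "mlt S X a = card P" "mlt S X b = card Q" unfolding mlt_def P_def Q_def by simp_all
  have "(\<Sum>j\<in>{3..card S}. chi {a,b} (U - lvl S X U j) - chi {a,b} U)
       = (\<Sum>j\<in>{3..card S}. if (j \<le> card P) \<noteq> (j \<le> card Q) then 1 else 0)"
  proof (rule sum.cong)
    fix j assume "j \<in> {3..card S}"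
    show "chi {a,b} (U - lvl S X U j) - chi {a,b} U = (if (j \<le> card P) \<noteq> (j \<le> card Q) then 1 else 0)"
      using ab aU bU cU ma by (simp add: chi_pair lvl_def)
  qed simp
  also have "\<dots> = real (card {j\<in>{3..card S}. (j \<le> card P) \<noteq> (j \<le> card Q)})" by (rule sum_if_card) simp
  finally have s3: "(\<Sum>j\<in>{3..card S}. chi {a,b} (U - lvl S X U j) - chi {a,b} U)
       = real (card {j\<in>{3..card S}. (j \<le> card P) \<noteq> (j \<le> card Q)})" .
  have "card {u\<in>S. (P = {u}) \<noteq> (Q = {u})} + card {j\<in>{3..card S}. (j \<le> card P) \<noteq> (j \<le> card Q)}
         \<le> card (P - Q) + card (Q - P)"
    by (rule comb_both) (use fS in \<open>auto simp: P_def Q_def\<close>)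
  then have "real (card {u\<in>S. (P = {u}) \<noteq> (Q = {u})}) + real (card {j\<in>{3..card S}. (j \<le> card P) \<noteq> (j \<le> card Q)})
         \<le> real (card (P - Q) + card (Q - P))" by linarith
  then show ?thesis using s1 s2 s3 cU by linarith
qed

lemma edge_key:
  assumes fS: "finite S" and ab: "a \<noteq> b" and XU: "\<And>u. u \<in> S \<Longrightarrow> X u \<subseteq> U"
  shows "(\<Sum>u\<in>S. chi {a,b} (prv S X u)) + (\<Sum>u\<in>S. chi {a,b} U - chi {a,b} (U - X u))
     + (\<Sum>j\<in>{3..card S}. chi {a,b} (U - lvl S X U j) - chi {a,b} U) \<le> 2 * chi {a,b} U"
proof (cases "a \<in> U")
  case True
  then show ?thesis
  proof (cases "b \<in> U")
    case True
    show ?thesis by (rule edge_in[OF fS ab]) (use XU True \<open>a \<in> U\<close> in auto)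
  next
    case False
    show ?thesis by (rule edge_out[OF fS ab]) (use XU False \<open>a \<in> U\<close> in auto)
  qed
next
  case False
  then show ?thesis
  proof (cases "b \<in> U")
    case True
    have ba: "b \<noteq> a" using ab by simp
    have "(\<Sum>u\<in>S. chi {b,a} (prv S X u)) + (\<Sum>u\<in>S. chi {b,a} U - chi {b,a} (U - X u))
     + (\<Sum>j\<in>{3..card S}. chi {b,a} (U - lvl S X U j) - chi {b,a} U) \<le> 2 * chi {b,a} U"
      by (rule edge_out[OF fS ba]) (use XU True False in auto)
    then show ?thesis by (simp add: insert_commute)
  next
    case F2: False
    show ?thesis by (rule edge_none[OF _ ab]) (use XU False F2 in auto)
  qed
qed

lemma cut_value_nonneg: "\<forall>e\<in>E. c e > 0 \<Longrightarrow> 0 \<le> cut_value E c W"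
  unfolding cut_value_def delta_def by (rule sum_nonneg) (simp add: less_imp_le)

lemma cut_value_empty: "cut_value E c {} = 0"
  unfolding cut_value_def delta_def by simp

lemma cut_value_compl:
  assumes G: "graph V E" shows "cut_value E c (V - W) = cut_value E c W"
proof -
  have finE: "finite E" using G by (rule graph_finE)
  have "\<And>e. e \<in> E \<Longrightarrow> chi e (V - W) = chi e W"
  proof -
    fix e assume "e \<in> E"
    then obtain a b where "e = {a,b}" "a \<noteq> b" "a \<in> V" "b \<in> V" using graph_edge[OF G] by blast
    then show "chi e (V - W) = chi e W" by (simp add: chi_pair)
  qed
  then show ?thesis by (simp add: cut_value_chi[OF finE])
qed

lemma submod:
  assumes G: "graph V E" and pos: "\<forall>e\<in>E. c e > 0"
  shows "cut_value E c (A \<inter> B) + cut_value E c (A \<union> B) \<le> cut_value E c A + cut_value E c B"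
proof -
  have finE: "finite E" using G by (rule graph_finE)
  have "\<And>e. e \<in> E \<Longrightarrow> c e * chi e (A \<inter> B) + c e * chi e (A \<union> B) \<le> c e * chi e A + c e * chi e B"
  proof -
    fix e assume eE: "e \<in> E"
    then obtain a b where "e = {a,b}" "a \<noteq> b" using graph_edge[OF G] by blast
    then have "chi e (A \<inter> B) + chi e (A \<union> B) \<le> chi e A + chi e B"
      by (cases "a \<in> A"; cases "a \<in> B"; cases "b \<in> A"; cases "b \<in> B") (simp_all add: chi_pair)
    then have "c e * (chi e (A \<inter> B) + chi e (A \<union> B)) \<le> c e * (chi e A + chi e B)"
      using pos eE by (intro mult_left_mono) (auto simp: less_imp_le)
    then show "c e * chi e (A \<inter> B) + c e * chi e (A \<union> B) \<le> c e * chi e A + c e * chi e B"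
      by (simp add: distrib_left)
  qed
  then have "(\<Sum>e\<in>E. c e * chi e (A \<inter> B) + c e * chi e (A \<union> B)) \<le> (\<Sum>e\<in>E. c e * chi e A + c e * chi e B)"
    by (rule sum_mono)
  then show ?thesis by (simp add: cut_value_chi[OF finE] sum.distrib)
qed

lemma conn_pos:
  assumes C: "connected_graph V E" and pos: "\<forall>e\<in>E. c e > 0" and W: "is_cut V W"
  shows "0 < cut_value E c W"
proof -
  have G: "graph V E" using C by (simp add: connected_graph_def)
  have finE: "finite E" using G by (rule graph_finE)
  obtain x where x: "x \<in> W" using W by (auto simp: is_cut_def)
  obtain y where y: "y \<in> V" "y \<notin> W" using W by (auto simp: is_cut_def)
  have xV: "x \<in> V" using x W by (auto simp: is_cut_def)
  have path: "(x, y) \<in> (adj E)\<^sup>*" using C xV y by (simp add: connected_graph_def)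
  have "y \<notin> W \<longrightarrow> (\<exists>e\<in>E. card (e \<inter> W) = 1)"
    using path
  proof (induction rule: rtrancl_induct)
    case base
    then show ?case using x by simp
  next
    case (step y z)
    show ?case
    proof
      assume zW: "z \<notin> W"
      show "\<exists>e\<in>E. card (e \<inter> W) = 1"
      proof (cases "y \<in> W")
        case True
        have "{y,z} \<in> E" using step(2) by (simp add: adj_def)
        moreover have "{y,z} \<inter> W = {y}" using True zW by auto
        ultimately show ?thesis by (metis card.empty card.insert empty_iff finite.emptyI One_nat_def)
      next
        case False
        then show ?thesis using step(3) by blast
      qed
    qed
  qed
  then obtain e where eE: "e \<in> E" and ce: "card (e \<inter> W) = 1" using y by blast
  have ed: "e \<in> delta E W" using eE ce by (simp add: delta_def)
  have fd: "finite (delta E W)" using finE by (simp add: delta_def)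
  have "c e \<le> cut_value E c W" unfolding cut_value_def
    by (rule member_le_sum[OF ed]) (use pos fd in \<open>auto simp: delta_def less_imp_le\<close>)
  then show ?thesis using pos eE by force
qed

lemma core:
  fixes \<alpha> lam :: real
  assumes G: "graph V E" and pos: "\<forall>e\<in>E. c e > 0" and cutU: "is_cut V U" and lam_pos: "lam > 0"
    and lam_le: "\<And>W. is_cut V W \<Longrightarrow> lam \<le> cut_value E c W" and dU: "cut_value E c U \<le> \<alpha> * lam"
  shows "\<exists>S. S \<noteq> {} \<and> S \<subseteq> U \<and> card S \<le> nat \<lfloor>2*\<alpha>\<rfloor> + 1 \<and>
    (\<forall>W. S \<subseteq> W \<and> W \<subseteq> U \<and> W \<noteq> U \<longrightarrow> cut_value E c U < cut_value E c W)"
proof -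
  define d where "d = cut_value E c"
  define good where "good S \<longleftrightarrow> S \<subseteq> U \<and> (\<forall>W. S \<subseteq> W \<and> W \<subseteq> U \<and> W \<noteq> U \<longrightarrow> d U < d W)" for S
  have "good U" unfolding good_def by auto
  then obtain S where gS: "good S" and minS: "\<And>S'. good S' \<Longrightarrow> card S \<le> card S'"
    using ex_has_least_nat[of good U card] by blast
  have finE: "finite E" using G by (rule graph_finE)
  have finV: "finite V" using G by (simp add: graph_def)
  have UV: "U \<subseteq> V" "U \<noteq> {}" using cutU by (auto simp: is_cut_def)
  have finU: "finite U" using finV UV finite_subset by auto
  have SU: "S \<subseteq> U" using gS good_def by auto
  have finS: "finite S" using finU SU finite_subset by auto
  have Sne: "S \<noteq> {}"
  proof
    assume "S = {}"
    then have "d U < d {}" using gS UV unfolding good_def by auto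
    then show False using cut_value_empty cut_value_nonneg[OF pos] unfolding d_def by (metis not_less)
  qed
  have "\<forall>u\<in>S. \<exists>W. S - {u} \<subseteq> W \<and> W \<subseteq> U \<and> W \<noteq> U \<and> d W \<le> d U"
  proof
    fix u assume uS: "u \<in> S"
    have "card (S - {u}) < card S" using finS uS by (meson card_Diff1_less)
    then have "\<not> good (S - {u})" using minS by fastforce
    then show "\<exists>W. S - {u} \<subseteq> W \<and> W \<subseteq> U \<and> W \<noteq> U \<and> d W \<le> d U"
      using SU unfolding good_def by (auto simp: not_less)
  qed
  then have "\<exists>f. \<forall>u\<in>S. S - {u} \<subseteq> f u \<and> f u \<subseteq> U \<and> f u \<noteq> U \<and> d (f u) \<le> d U"
    by (rule bchoice)
  then obtain Wf where Wf: "\<forall>u\<in>S. S - {u} \<subseteq> Wf u \<and> Wf u \<subseteq> U \<and> Wf u \<noteq> U \<and> d (Wf u) \<le> d U"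
    by (elim exE)
  have gS': "d U < d W" if "S \<subseteq> W" "W \<subseteq> U" "W \<noteq> U" for W
    using gS that unfolding good_def by blast
  have u_notin: "u \<notin> Wf u" if uS: "u \<in> S" for u
  proof
    assume "u \<in> Wf u"
    have W1: "S - {u} \<subseteq> Wf u" "Wf u \<subseteq> U" "Wf u \<noteq> U" "d (Wf u) \<le> d U" using Wf uS by auto
    then have "S \<subseteq> Wf u" using \<open>u \<in> Wf u\<close> by auto
    then have "d U < d (Wf u)" using gS' W1 by blast
    then show False using W1 by linarith
  qed
  define X where "X u = U - Wf u" for u
  have XU: "X u \<subseteq> U" for u unfolding X_def by auto
  have uX: "u \<in> X u" if "u \<in> S" for u using that u_notin SU unfolding X_def by auto
  have XS: "v = u" if "u \<in> S" "v \<in> S" "v \<in> X u" for u v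
    using that Wf unfolding X_def by auto
  have UX: "U - X u = Wf u" if "u \<in> S" for u using Wf that unfolding X_def by auto
  have bad: "d (U - X u) \<le> d U" if "u \<in> S" for u using UX[OF that] Wf that by auto
  define Z where "Z u = prv S X u" for u
  define L where "L j = lvl S X U j" for j
  have mS: "mlt S X s = 1" if "s \<in> S" for s
  proof -
    have "{v\<in>S. s \<in> X v} = {s}" using that uX XS by auto
    then show ?thesis unfolding mlt_def by simp
  qed
  have levgood: "d U \<le> d (U - L j)" if "3 \<le> j" for j
  proof (cases "L j = {}")
    case True then show ?thesis by simp
  next
    case False
    have "S \<subseteq> U - L j" using SU mS that unfolding L_def lvl_def by auto
    moreover have "U - L j \<noteq> U" using False unfolding L_def lvl_def by auto
    ultimately show ?thesis using gS unfolding good_def by (auto intro: less_imp_le)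
  qed
  have Zcut: "is_cut V (Z u)" if "u \<in> S" for u
  proof -
    have "u \<in> Z u" using that uX XS unfolding Z_def prv_def by auto
    moreover have "Z u \<subseteq> U" using XU[of u] prv_sub[of S X u] unfolding Z_def by blast
    ultimately show ?thesis using cutU unfolding is_cut_def by auto
  qed
  define F where "F e = (\<Sum>u\<in>S. chi e (Z u)) + (\<Sum>u\<in>S. chi e U - chi e (U - X u))
     + (\<Sum>j\<in>{3..card S}. chi e (U - L j) - chi e U)" for e
  have Fe: "F e \<le> 2 * chi e U" if eE: "e \<in> E" for e
  proof -
    obtain a b where eab: "e = {a,b}" and ab: "a \<noteq> b" using graph_edge[OF G eE] by blast
    have "F {a,b} \<le> 2 * chi {a,b} U" unfolding F_def Z_def L_def
      by (rule edge_key[OF finS ab]) (rule XU)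
    then show ?thesis using eab by simp
  qed
  have "(\<Sum>e\<in>E. c e * F e) \<le> (\<Sum>e\<in>E. c e * (2 * chi e U))"
    by (rule sum_mono) (use Fe pos in \<open>auto intro: mult_left_mono simp: less_imp_le\<close>)
  also have "\<dots> = 2 * d U" unfolding d_def by (simp add: cut_value_chi[OF finE] sum_distrib_left mult.left_commute)
  finally have ineq: "(\<Sum>e\<in>E. c e * F e) \<le> 2 * d U" .
  have e1: "(\<Sum>u\<in>S. d (Z u)) = (\<Sum>e\<in>E. c e * (\<Sum>u\<in>S. chi e (Z u)))"
    unfolding d_def cut_value_chi[OF finE] by (rule sum_swap_c)
  have e2: "(\<Sum>u\<in>S. d U - d (U - X u)) = (\<Sum>e\<in>E. c e * (\<Sum>u\<in>S. chi e U - chi e (U - X u)))"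
    unfolding d_def cut_value_chi[OF finE] sum_swap_c[symmetric]
    by (simp add: sum_subtractf right_diff_distrib)
  have e3: "(\<Sum>j\<in>{3..card S}. d (U - L j) - d U) = (\<Sum>e\<in>E. c e * (\<Sum>j\<in>{3..card S}. chi e (U - L j) - chi e U))"
    unfolding d_def cut_value_chi[OF finE] sum_swap_c[symmetric]
    by (simp add: sum_subtractf right_diff_distrib)
  have "(\<Sum>e\<in>E. c e * F e) = (\<Sum>u\<in>S. d (Z u)) + (\<Sum>u\<in>S. d U - d (U - X u)) + (\<Sum>j\<in>{3..card S}. d (U - L j) - d U)"
    unfolding e1 e2 e3 F_def by (simp add: distrib_left sum.distrib)
  moreover have "0 \<le> (\<Sum>u\<in>S. d U - d (U - X u))" using bad by (intro sum_nonneg) simp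
  moreover have "0 \<le> (\<Sum>j\<in>{3..card S}. d (U - L j) - d U)" using levgood by (intro sum_nonneg) simp
  ultimately have sumZ: "(\<Sum>u\<in>S. d (Z u)) \<le> 2 * d U" using ineq by linarith
  have "real (card S) * lam = (\<Sum>u\<in>S. lam)" by simp
  also have "\<dots> \<le> (\<Sum>u\<in>S. d (Z u))" using Zcut lam_le unfolding d_def by (intro sum_mono) blast
  finally have "real (card S) * lam \<le> 2 * (\<alpha> * lam)" using sumZ dU unfolding d_def by linarith
  then have "real (card S) \<le> 2 * \<alpha>" using lam_pos by (simp add: mult.assoc[symmetric] mult_le_cancel_right)
  then have "int (card S) \<le> \<lfloor>2 * \<alpha>\<rfloor>" by (simp add: le_floor_iff)
  then have "card S \<le> nat \<lfloor>2 * \<alpha>\<rfloor>" by linarith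
  moreover have "\<forall>W. S \<subseteq> W \<and> W \<subseteq> U \<and> W \<noteq> U \<longrightarrow> cut_value E c U < cut_value E c W"
    using gS' unfolding d_def by blast
  ultimately show ?thesis using Sne SU by (intro exI[of _ S] conjI) simp_all
qed

theorem theorem1p1:
  fixes V :: "'a set" and E :: "'a set set" and c :: "'a set \<Rightarrow> real"
    and \<alpha> :: real and U :: "'a set"
  assumes "connected_graph V E"
    and "\<forall>e\<in>E. c e > 0"
    and "\<alpha> \<ge> 1"
    and "approx_min_cut V E c \<alpha> U"
  shows "\<exists>S T. S \<subseteq> V \<and> T \<subseteq> V \<and>
           card S \<le> nat \<lfloor>2 * \<alpha>\<rfloor> + 1 \<and> card T \<le> nat \<lfloor>2 * \<alpha>\<rfloor> + 1 \<and>
           unique_min_terminal_cut V E c S T U"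
proof -
  note C = assms(1) and pos = assms(2)
  have G: "graph V E" using C by (simp add: connected_graph_def)
  have finV: "finite V" using G by (simp add: graph_def)
  define lam where "lam = min_cut_value V E c"
  have cutU: "is_cut V U" and dU: "cut_value E c U \<le> \<alpha> * lam"
    using assms(4) unfolding approx_min_cut_def lam_def by simp_all
  have setC: "{cut_value E c W | W. is_cut V W} = cut_value E c ` {W. is_cut V W}" by blast
  have finC: "finite {cut_value E c W | W. is_cut V W}"
  proof -
    have "{W. is_cut V W} \<subseteq> Pow V" by (auto simp: is_cut_def)
    then have "finite {W. is_cut V W}" using finV by (meson finite_Pow_iff finite_subset)
    then show ?thesis unfolding setC by simp
  qed
  have lam_le: "lam \<le> cut_value E c W" if "is_cut V W" for W
    unfolding lam_def min_cut_value_def by (rule Min_le[OF finC]) (use that in blast)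
  have "lam \<in> {cut_value E c W | W. is_cut V W}"
    unfolding lam_def min_cut_value_def by (rule Min_in[OF finC]) (use cutU in blast)
  then obtain W0 where W0: "lam = cut_value E c W0" "is_cut V W0" by blast
  have lam_pos: "lam > 0" using conn_pos[OF C pos W0(2)] W0(1) by simp
  have UV: "U \<subseteq> V" "U \<noteq> {}" "U \<noteq> V" using cutU by (auto simp: is_cut_def)
  have cutU': "is_cut V (V - U)" using UV unfolding is_cut_def by auto
  have dc: "cut_value E c (V - W) = cut_value E c W" for W by (rule cut_value_compl[OF G])
  have dU': "cut_value E c (V - U) \<le> \<alpha> * lam" using dU dc[of U] by simp
  have "\<exists>S. S \<noteq> {} \<and> S \<subseteq> U \<and> card S \<le> nat \<lfloor>2*\<alpha>\<rfloor> + 1 \<and>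
    (\<forall>W. S \<subseteq> W \<and> W \<subseteq> U \<and> W \<noteq> U \<longrightarrow> cut_value E c U < cut_value E c W)"
    by (rule core[OF G pos cutU lam_pos lam_le dU])
  then obtain S where S: "S \<noteq> {}" "S \<subseteq> U" "card S \<le> nat \<lfloor>2*\<alpha>\<rfloor> + 1"
    and Sg: "\<forall>W. S \<subseteq> W \<and> W \<subseteq> U \<and> W \<noteq> U \<longrightarrow> cut_value E c U < cut_value E c W"
    by (elim exE conjE)
  have "\<exists>T. T \<noteq> {} \<and> T \<subseteq> V - U \<and> card T \<le> nat \<lfloor>2*\<alpha>\<rfloor> + 1 \<and>
    (\<forall>W. T \<subseteq> W \<and> W \<subseteq> V - U \<and> W \<noteq> V - U \<longrightarrow> cut_value E c (V - U) < cut_value E c W)"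
    by (rule core[OF G pos cutU' lam_pos lam_le dU'])
  then obtain T where T: "T \<noteq> {}" "T \<subseteq> V - U" "card T \<le> nat \<lfloor>2*\<alpha>\<rfloor> + 1"
    and Tg: "\<forall>W. T \<subseteq> W \<and> W \<subseteq> V - U \<and> W \<noteq> V - U \<longrightarrow> cut_value E c (V - U) < cut_value E c W"
    by (elim exE conjE)
  have tcut: "terminal_cut V S T U" unfolding terminal_cut_def using S(1,2) T(1,2) UV(1) by auto
  have uniq: "cut_value E c U < cut_value E c W" if W: "terminal_cut V S T W" "W \<noteq> U" for W
  proof -
    have SW: "S \<subseteq> W" and WT: "W \<subseteq> V - T" using W(1) unfolding terminal_cut_def by auto
    define A where "A = W \<inter> U"
    define B where "B = W \<union> U"
    have sm: "cut_value E c A + cut_value E c B \<le> cut_value E c W + cut_value E c U"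
      unfolding A_def B_def by (rule submod[OF G pos])
    have SA: "S \<subseteq> A" "A \<subseteq> U" using SW S(2) unfolding A_def by auto
    have A1: "cut_value E c U < cut_value E c A" if "A \<noteq> U"
      using Sg SA that by blast
    have TB: "T \<subseteq> V - B" "V - B \<subseteq> V - U" using WT T(2) unfolding B_def by auto
    have B1: "cut_value E c U < cut_value E c B" if nB: "B \<noteq> U"
    proof -
      have "B \<subseteq> V" using WT UV(1) unfolding B_def by auto
      then have "V - B \<noteq> V - U" using nB UV(1) unfolding B_def by auto
      then have "cut_value E c (V - U) < cut_value E c (V - B)" using Tg TB by blast
      then show ?thesis using dc[of U] dc[of B] by simp
    qed
    have "A \<noteq> U \<or> B \<noteq> U" using W(2) unfolding A_def B_def by auto
    then show ?thesis
    proof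
      assume nA: "A \<noteq> U"
      have "cut_value E c U \<le> cut_value E c B"
        using B1 by (cases "B = U") (auto intro: less_imp_le)
      then show ?thesis using A1[OF nA] sm by linarith
    next
      assume nB: "B \<noteq> U"
      have "cut_value E c U \<le> cut_value E c A"
        using A1 by (cases "A = U") (auto intro: less_imp_le)
      then show ?thesis using B1[OF nB] sm by linarith
    qed
  qed
  have "unique_min_terminal_cut V E c S T U"
    unfolding unique_min_terminal_cut_def using tcut uniq by blast
  moreover have "S \<subseteq> V" "T \<subseteq> V" using S(2) T(2) UV(1) by auto
  ultimately show ?thesis using S(3) T(3) by blast
qed

end
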